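(* Let $\mathfrak{d}=\bigoplus_{n\ge0}\mathfrak{d}_n:\mathsf{cf}(\mathrm{UT}_\bullet)\to\mathsf{cf}(\mathrm{UT}_\bullet)$ with $\mathfrak{d}_n(\psi)=\psi\circ\dagger$. Then $\mathfrak{d}$ is a graded antiautomorphism of the Hopf algebra $\mathsf{cf}(\mathrm{UT}_\bullet)$, i.e. $\mu\circ(\mathfrak{d}\otimes\mathfrak{d})=\mathfrak{d}\circ\mu\circ\beta$ and $\Delta\circ\mathfrak{d}=\beta\circ(\mathfrak{d}\otimes\mathfrak{d})\circ\Delta$, where $\beta$ swaps the two tensor factors. Moreover $\mathrm{Ind}^{\mathrm{GL}}_{\mathrm{UT}}\circ\mathfrak{d}=\mathrm{Ind}^{\mathrm{GL}}_{\mathrm{UT}}$, where $\mathrm{Ind}^{\mathrm{GL}}_{\mathrm{UT}}=\bigoplus_n\mathrm{Ind}^{\mathrm{GL}_n}_{\mathrm{UT}_n}$.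
   Context: Fix the finite field $\mathbb{F}_q$; $[n]=\{1,\dots,n\}$. $\mathrm{GL}_n$ is the group of invertible $n\times n$ matrices over $\mathbb{F}_q$, $\mathrm{UT}_n$ the unipotent upper triangular subgroup, $\mathsf{cf}(G)$ complex class functions, $\mathrm{Ind}$ induction. Let $\tilde w(i)=n+1-i$ and for an $n\times n$ matrix $x$ define $x^\dagger$ by $(x^\dagger)_{r,s}=x_{\tilde w(s),\tilde w(r)}$; $\dagger$ is an anti-automorphism of $\mathrm{GL}_n$ preserving $\mathrm{UT}_n$. Hopf algebra $\mathsf{cf}(\mathrm{UT}_\bullet)=\bigoplus_n\mathsf{cf}(\mathrm{UT}_n)$: for $I\subseteq[n]$, $I^c=[n]\setminus I$, let $\mathrm{UL}_I=\{g\in\mathrm{UT}_n:(g-1_n)_{i,j}\ne0\text{ only if }(i,j)\in I\times I\cup I^c\times I^c\}$, $\mathrm{UR}_I=\{g\in\mathrm{UT}_n:(g-1_n)_{i,j}\ne0\text{ only if }(i,j)\in I\times I^c\}$, $\mathrm{UP}_I=\{g\in\mathrm{UT}_n:(g-1_n)_{i,j}=0\text{ for }(i,j)\in I^c\times I\}=\mathrm{UL}_I\ltimes\mathrm{UR}_I$ (and $\mathrm{UP}_{[i]}=\mathrm{UT}_n$). With $\mathrm{cano}_I:I\to[|I|]$ order-preserving, $\mathrm{UL}_I\cong\mathrm{UT}_{|I|}\times\mathrm{UT}_{|I^c|}$ by relabelling the $I\times I$ and $I^c\times I^c$ blocks via $\mathrm{cano}_I,\mathrm{cano}_{I^c}$,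 inducing $\mathrm{st}_{(I,I^c)}:\mathsf{cf}(\mathrm{UL}_I)\to\mathsf{cf}(\mathrm{UT}_{|I|})\otimes\mathsf{cf}(\mathrm{UT}_{|I^c|})$. Product $\mu=\bigoplus_{n\ge i\ge0}\mathrm{Inf}^{\mathrm{UT}_n}_{\mathrm{UL}_{[i]}}\circ\mathrm{st}^{-1}_{([i],[i]^c)}$ where $\mathrm{Inf}\psi(lr)=\psi(l)$; coproduct $\Delta=\bigoplus_n\sum_{I\subseteq[n]}\mathrm{st}_{(I,I^c)}\circ\mathrm{Def}^{\mathrm{UP}_I}_{\mathrm{UL}_I}\circ\mathrm{Res}^{\mathrm{UT}_n}_{\mathrm{UP}_I}$ where $\mathrm{Def}^{\mathrm{UP}_I}_{\mathrm{UL}_I}\psi(g)=\frac1{|\mathrm{UR}_I|}\sum_{x\in\mathrm{UR}_I}\psi(gx)$. *)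

theory Defs
  imports Complex_Main "Jordan_Normal_Form.Matrix"
begin

(* Finite field F_q: a type 'a :: {finite, field}.  n x n matrices: JNF matrices in
   carrier_mat n n, indices 0..n-1 (0-based; the paper's index i corresponds to i-1). *)

definition UT :: "nat \<Rightarrow> ('a::{finite,field}) mat set" where
  "UT n = {A \<in> carrier_mat n n. (\<forall>i<n. A $$ (i,i) = 1) \<and>
                                (\<forall>i<n. \<forall>j<n. j < i \<longrightarrow> A $$ (i,j) = 0)}"

definition GL :: "nat \<Rightarrow> ('a::{finite,field}) mat set" where
  "GL n = {A \<in> carrier_mat n n. invertible_mat A}"

definition mat_inv :: "nat \<Rightarrow> ('a::{finite,field}) mat \<Rightarrow> 'a mat" where
  "mat_inv n A = (THE B. B \<in> carrier_mat n n \<and> A * B = 1\<^sub>m n)"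

(* complex class functions on UT_n, viewed as functions on all matrices vanishing off UT_n *)
definition cf :: "nat \<Rightarrow> (('a::{finite,field}) mat \<Rightarrow> complex) set" where
  "cf n = {\<psi>. (\<forall>A. A \<notin> UT n \<longrightarrow> \<psi> A = 0) \<and>
              (\<forall>g\<in>UT n. \<forall>h\<in>UT n. \<psi> (h * g * mat_inv n h) = \<psi> g)}"

(* cf(UT_a) \<otimes> cf(UT_b) identified with class functions of UT_a x UT_b *)
definition cf2 :: "nat \<Rightarrow> nat \<Rightarrow> (('a::{finite,field}) mat \<times> 'a mat \<Rightarrow> complex) set" where
  "cf2 a b = {\<Phi>. (\<forall>x y. (x \<notin> UT a \<or> y \<notin> UT b) \<longrightarrow> \<Phi> (x,y) = 0) \<and>
              (\<forall>x\<in>UT a. \<forall>y\<in>UT b. \<forall>h\<in>UT a. \<forall>k\<in>UT b.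
                  \<Phi> (h * x * mat_inv a h, k * y * mat_inv b k) = \<Phi> (x,y))}"

definition dagger :: "nat \<Rightarrow> 'a mat \<Rightarrow> 'a mat" where
  "dagger n A = mat n n (\<lambda>(r,s). A $$ (n - 1 - s, n - 1 - r))"

definition dual :: "nat \<Rightarrow> (('a::{finite,field}) mat \<Rightarrow> complex) \<Rightarrow> ('a mat \<Rightarrow> complex)" where
  "dual n \<psi> = (\<lambda>A. if A \<in> UT n then \<psi> (dagger n A) else 0)"

definition dual2 :: "nat \<Rightarrow> nat \<Rightarrow> (('a::{finite,field}) mat \<times> 'a mat \<Rightarrow> complex)
                     \<Rightarrow> ('a mat \<times> 'a mat \<Rightarrow> complex)" where
  "dual2 a b \<Phi> = (\<lambda>(x,y). if x \<in> UT a \<and> y \<in> UT b then \<Phi> (dagger a x, dagger b y) else 0)"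

definition swapf :: "('b \<times> 'b \<Rightarrow> complex) \<Rightarrow> ('b \<times> 'b \<Rightarrow> complex)" where
  "swapf \<Phi> = (\<lambda>(x,y). \<Phi> (y,x))"

(* product mu = Inf^{UT_{a+b}}_{UL_{[a]}} o st^{-1}: Inf psi (l r) = psi(l), and the
   diagonal blocks of l r equal those of l *)
definition mu :: "nat \<Rightarrow> nat \<Rightarrow> (('a::{finite,field}) mat \<times> 'a mat \<Rightarrow> complex)
                  \<Rightarrow> ('a mat \<Rightarrow> complex)" where
  "mu a b \<Phi> = (\<lambda>g. if g \<in> UT (a + b) then
       \<Phi> (mat a a (\<lambda>(i,j). g $$ (i,j)), mat b b (\<lambda>(i,j). g $$ (a + i, a + j))) else 0)"

definition cano :: "nat set \<Rightarrow> nat \<Rightarrow> nat" where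
  "cano I i = card {k \<in> I. k < i}"

definition UL :: "nat \<Rightarrow> nat set \<Rightarrow> ('a::{finite,field}) mat set" where
  "UL n I = {g \<in> UT n. \<forall>i<n. \<forall>j<n. (g - 1\<^sub>m n) $$ (i,j) \<noteq> 0 \<longrightarrow>
               (i \<in> I \<and> j \<in> I) \<or> (i \<notin> I \<and> j \<notin> I)}"

definition UR :: "nat \<Rightarrow> nat set \<Rightarrow> ('a::{finite,field}) mat set" where
  "UR n I = {g \<in> UT n. \<forall>i<n. \<forall>j<n. (g - 1\<^sub>m n) $$ (i,j) \<noteq> 0 \<longrightarrow> i \<in> I \<and> j \<notin> I}"

definition st :: "nat \<Rightarrow> nat set \<Rightarrow> 'a mat \<Rightarrow> 'a mat \<times> 'a mat" where
  "st n I g = (let J = {0..<n} - I in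
     (mat (card I) (card I) (\<lambda>(i,j). g $$ (inv_into I (cano I) i, inv_into I (cano I) j)),
      mat (card J) (card J) (\<lambda>(i,j). g $$ (inv_into J (cano J) i, inv_into J (cano J) j))))"

(* Def^{UP_I}_{UL_I} o Res^{UT_n}_{UP_I}, as a function on UL_I *)
definition DefRes :: "nat \<Rightarrow> nat set \<Rightarrow> (('a::{finite,field}) mat \<Rightarrow> complex) \<Rightarrow> ('a mat \<Rightarrow> complex)" where
  "DefRes n I \<psi> = (\<lambda>g. (1 / of_nat (card (UR n I :: 'a mat set))) * (\<Sum>x\<in>UR n I. \<psi> (g * x)))"

(* component of the coproduct Delta(psi) in cf(UT_a) \<otimes> cf(UT_{n-a}):
   sum over I \<subseteq> [n] with |I| = a of st_{(I,I^c)} (Def o Res psi) *)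
definition coprod :: "nat \<Rightarrow> nat \<Rightarrow> (('a::{finite,field}) mat \<Rightarrow> complex)
                      \<Rightarrow> ('a mat \<times> 'a mat \<Rightarrow> complex)" where
  "coprod n a \<psi> = (\<lambda>(x,y). \<Sum>I\<in>{I. I \<subseteq> {0..<n} \<and> card I = a}.
       \<Sum>g\<in>{g \<in> UL n I. st n I g = (x,y)}. DefRes n I \<psi> g)"

definition ind :: "nat \<Rightarrow> (('a::{finite,field}) mat \<Rightarrow> complex) \<Rightarrow> ('a mat \<Rightarrow> complex)" where
  "ind n \<psi> = (\<lambda>g. if g \<in> GL n then
       (1 / of_nat (card (UT n :: 'a mat set))) * (\<Sum>x\<in>GL n. \<psi> (mat_inv n x * g * x))
     else 0)"

end

theory Submission
  imports Defs "Jordan_Normal_Form.Jordan_Normal_Form_Existence"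
begin


definition rev_mat :: "nat \<Rightarrow> 'a::{zero,one} mat" where
  "rev_mat n = mat n n (\<lambda>(i,j). if i + j + 1 = n then 1 else 0)"

lemma rev_mat_carrier[simp]: "rev_mat n \<in> carrier_mat n n"
  by (simp add: rev_mat_def)

lemma rev_mat_dim[simp]: "dim_row (rev_mat n) = n" "dim_col (rev_mat n) = n"
  by (auto simp: rev_mat_def)

lemma rev_mat_L: assumes A: "(A::'a::comm_ring_1 mat) \<in> carrier_mat n m"
  shows "rev_mat n * A = mat n m (\<lambda>(i,j). A $$ (n - 1 - i, j))"
proof (rule eq_matI)
  fix i j assume i: "i < dim_row (mat n m (\<lambda>(i,j). A $$ (n - 1 - i, j)))"
     and j: "j < dim_col (mat n m (\<lambda>(i,j). A $$ (n - 1 - i, j)))"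
  hence i: "i < n" and j: "j < m" by auto
  have "(rev_mat n * A) $$ (i,j) = (\<Sum>k\<in>{0..<n}. (if i + k + 1 = n then 1 else 0) * A $$ (k,j))"
    using A i j by (simp add: rev_mat_def scalar_prod_def)
  also have "\<dots> = (\<Sum>k\<in>{0..<n}. (if k = n - 1 - i then A $$ (k,j) else 0))"
    using i by (intro sum.cong) auto
  also have "\<dots> = A $$ (n - 1 - i, j)" using i by simp
  finally show "(rev_mat n * A) $$ (i,j) = mat n m (\<lambda>(i,j). A $$ (n - 1 - i, j)) $$ (i,j)"
    using i j by simp
qed (use A in auto)

lemma rev_mat_R: assumes A: "(A::'a::comm_ring_1 mat) \<in> carrier_mat m n"
  shows "A * rev_mat n = mat m n (\<lambda>(i,j). A $$ (i, n - 1 - j))"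
proof (rule eq_matI)
  fix i j assume i: "i < dim_row (mat m n (\<lambda>(i,j). A $$ (i, n - 1 - j)))"
     and j: "j < dim_col (mat m n (\<lambda>(i,j). A $$ (i, n - 1 - j)))"
  hence i: "i < m" and j: "j < n" by auto
  have "(A * rev_mat n) $$ (i,j) = (\<Sum>k\<in>{0..<n}. A $$ (i,k) * (if k + j + 1 = n then 1 else 0))"
    using A i j by (simp add: rev_mat_def scalar_prod_def)
  also have "\<dots> = (\<Sum>k\<in>{0..<n}. (if k = n - 1 - j then A $$ (i,k) else 0))"
    using j by (intro sum.cong) auto
  also have "\<dots> = A $$ (i, n - 1 - j)" using j by simp
  finally show "(A * rev_mat n) $$ (i,j) = mat m n (\<lambda>(i,j). A $$ (i, n - 1 - j)) $$ (i,j)"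
    using i j by simp
qed (use A in auto)

lemma rev_rev: "rev_mat n * rev_mat n = (1\<^sub>m n :: 'a::comm_ring_1 mat)"
  by (subst rev_mat_L[of _ n n]) (auto simp: rev_mat_def intro!: eq_matI)

lemma dagger_alt: assumes A: "(A::'a::comm_ring_1 mat) \<in> carrier_mat n n"
  shows "dagger n A = rev_mat n * transpose_mat A * rev_mat n"
proof -
  have "rev_mat n * transpose_mat A = mat n n (\<lambda>(i,j). A $$ (j, n - 1 - i))"
    using A by (subst rev_mat_L[of _ n n]) (auto intro!: eq_matI)
  moreover have "mat n n (\<lambda>(i,j). A $$ (j, n - 1 - i)) * rev_mat n = dagger n A"
    by (subst rev_mat_R[of _ n n]) (auto simp: dagger_def intro!: eq_matI)
  ultimately show ?thesis by simp
qed

lemma dagger_carrier[simp]: "dagger n A \<in> carrier_mat n n"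
  by (simp add: dagger_def)

lemma dagger_index[simp]: "i < n \<Longrightarrow> j < n \<Longrightarrow> dagger n A $$ (i,j) = A $$ (n - 1 - j, n - 1 - i)"
  "dim_row (dagger n A) = n" "dim_col (dagger n A) = n"
  by (auto simp: dagger_def)

lemma dagger_dagger: assumes "A \<in> carrier_mat n n" shows "dagger n (dagger n A) = A"
  using assms by (auto intro!: eq_matI)

lemma dagger_one[simp]: "dagger n (1\<^sub>m n :: 'a::{zero,one} mat) = 1\<^sub>m n"
  by (auto intro!: eq_matI)

lemma dagger_mult: assumes A: "(A::'a::comm_ring_1 mat) \<in> carrier_mat n n" and B: "B \<in> carrier_mat n n"
  shows "dagger n (A * B) = dagger n B * dagger n A"
proof -
  have R: "\<And>X. X \<in> carrier_mat n n \<Longrightarrow> rev_mat n * (rev_mat n * X) = (X :: 'a mat)"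
    by (subst assoc_mult_mat[symmetric, of _ n n _ n _ n]) (auto simp: rev_rev)
  let ?W = "rev_mat n :: 'a mat"
  have c1: "transpose_mat B * ?W \<in> carrier_mat n n" "transpose_mat A * ?W \<in> carrier_mat n n"
     "?W * (transpose_mat A * ?W) \<in> carrier_mat n n" "transpose_mat B * transpose_mat A \<in> carrier_mat n n"
    using A B by auto
  have "dagger n B * dagger n A = ?W * (transpose_mat B * (?W * (?W * (transpose_mat A * ?W))))"
    using A B by (simp add: dagger_alt assoc_mult_mat[of _ n n _ n _ n] c1)
  also have "\<dots> = ?W * (transpose_mat B * (transpose_mat A * ?W))"
    using A B by (simp add: R)
  also have "\<dots> = dagger n (A * B)"
    using A B by (simp add: dagger_alt transpose_mult assoc_mult_mat[of _ n n _ n _ n] c1)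
  finally show ?thesis by simp
qed



lemma UT_carrier: "A \<in> UT n \<Longrightarrow> A \<in> carrier_mat n n" by (simp add: UT_def)

lemma UT_one[simp]: "1\<^sub>m n \<in> UT n" by (auto simp: UT_def)

lemma UT_mult: assumes A: "A \<in> UT n" and B: "B \<in> UT n" shows "A * B \<in> UT n"
proof -
  have Ac: "A \<in> carrier_mat n n" and Bc: "B \<in> carrier_mat n n" using A B by (auto simp: UT_def)
  have Ad: "\<And>i. i < n \<Longrightarrow> A $$ (i,i) = 1" and Al: "\<And>i j. i < n \<Longrightarrow> j < i \<Longrightarrow> A $$ (i,j) = 0"
    using A by (auto simp: UT_def)
  have Bd: "\<And>i. i < n \<Longrightarrow> B $$ (i,i) = 1" and Bl: "\<And>i j. i < n \<Longrightarrow> j < i \<Longrightarrow> B $$ (i,j) = 0"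
    using B by (auto simp: UT_def)
  have e: "\<And>i j. i < n \<Longrightarrow> j < n \<Longrightarrow> (A * B) $$ (i,j) = (\<Sum>k\<in>{0..<n}. A $$ (i,k) * B $$ (k,j))"
    using Ac Bc by (simp add: scalar_prod_def)
  have d: "(A * B) $$ (i,i) = 1" if i: "i < n" for i
  proof -
    have "(\<Sum>k\<in>{0..<n}. A $$ (i,k) * B $$ (k,i)) = (\<Sum>k\<in>{0..<n}. if k = i then 1 else 0)"
    proof (intro sum.cong refl)
      fix k assume k: "k \<in> {0..<n}"
      show "A $$ (i,k) * B $$ (k,i) = (if k = i then 1 else 0)"
        using k i Ad Bd Al[of i k] Bl[of k i] by (cases "k < i"; cases "k = i") auto
    qed
    thus ?thesis using i e by simp
  qed
  have l: "(A * B) $$ (i,j) = 0" if i: "i < n" and j: "j < i" for i j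
  proof -
    have "(\<Sum>k\<in>{0..<n}. A $$ (i,k) * B $$ (k,j)) = 0"
    proof (intro sum.neutral ballI)
      fix k assume k: "k \<in> {0..<n}"
      show "A $$ (i,k) * B $$ (k,j) = 0"
        using k i j Al[of i k] Bl[of k j] by (cases "k < i") auto
    qed
    thus ?thesis using i j e by simp
  qed
  show ?thesis using Ac Bc d l by (auto simp: UT_def)
qed

lemma finite_carrier_mat: "finite (carrier_mat n m :: 'a::finite mat set)"
proof -
  let ?f = "\<lambda>A::'a mat. restrict (\<lambda>p. A $$ p) ({0..<n} \<times> {0..<m})"
  have "?f ` carrier_mat n m \<subseteq> PiE ({0..<n} \<times> {0..<m}) (\<lambda>_. UNIV)"
    by (intro image_subsetI) (simp add: restrict_PiE_iff)
  moreover have "finite (PiE ({0..<n} \<times> {0..<m}) (\<lambda>_. UNIV :: 'a set))"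
    by (intro finite_PiE) auto
  ultimately have "finite (?f ` carrier_mat n m)" by (rule finite_subset)
  moreover have "inj_on ?f (carrier_mat n m)"
  proof (rule inj_onI)
    fix A B assume A: "A \<in> carrier_mat n m" and B: "B \<in> carrier_mat n m" and e: "?f A = ?f B"
    show "A = B"
    proof (rule eq_matI)
      fix i j assume "i < dim_row B" "j < dim_col B"
      hence "(i,j) \<in> {0..<n} \<times> {0..<m}" using B by auto
      thus "A $$ (i,j) = B $$ (i,j)" using fun_cong[OF e, of "(i,j)"] by simp
    qed (use A B in auto)
  qed
  ultimately show ?thesis by (rule finite_imageD)
qed

lemma finite_UT: "finite (UT n :: 'a::{finite,field} mat set)"
  by (rule finite_subset[OF _ finite_carrier_mat[of n n]]) (auto simp: UT_def)

lemma finite_GL: "finite (GL n :: 'a::{finite,field} mat set)"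
  by (rule finite_subset[OF _ finite_carrier_mat[of n n]]) (auto simp: GL_def)

lemma mat_inv_eq: assumes A: "(A::'a::{finite,field} mat) \<in> carrier_mat n n" and B: "B \<in> carrier_mat n n"
  and AB: "A * B = 1\<^sub>m n" shows "mat_inv n A = B"
  unfolding mat_inv_def
proof (rule the_equality)
  fix C assume C: "C \<in> carrier_mat n n \<and> A * C = 1\<^sub>m n"
  have BA: "B * A = 1\<^sub>m n" by (rule mat_mult_left_right_inverse[OF A B AB])
  have Cc: "C \<in> carrier_mat n n" using C by simp
  have "C = (B * A) * C" using Cc BA by simp
  also have "\<dots> = B * (A * C)" using A B C by (simp add: assoc_mult_mat[of _ n n _ n _ n])
  finally show "C = B" using C B by simp
qed (use B AB in auto)

lemma GL_I: assumes A: "(A::'a::{finite,field} mat) \<in> carrier_mat n n" and B: "B \<in> carrier_mat n n"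
  and AB: "A * B = 1\<^sub>m n" shows "A \<in> GL n"
proof -
  have BA: "B * A = 1\<^sub>m n" by (rule mat_mult_left_right_inverse[OF A B AB])
  show ?thesis using A B AB BA unfolding GL_def invertible_mat_def inverts_mat_def square_mat.simps
    by auto
qed

lemma GL_D: assumes A: "(A::'a::{finite,field} mat) \<in> GL n"
  shows "mat_inv n A \<in> carrier_mat n n" "A * mat_inv n A = 1\<^sub>m n" "mat_inv n A * A = 1\<^sub>m n"
    "A \<in> carrier_mat n n"
proof -
  have Ac: "A \<in> carrier_mat n n" and inv: "invertible_mat A" using A by (auto simp: GL_def)
  then obtain B where AB: "A * B = 1\<^sub>m n" and BA: "B * A = 1\<^sub>m (dim_row B)"
    unfolding invertible_mat_def inverts_mat_def by auto
  have "dim_col (A * B) = n" using AB by simp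
  hence cB: "dim_col B = n" by simp
  have "dim_row (B * A) = dim_col (B * A)" using BA by simp
  hence rB: "dim_row B = n" using Ac by simp
  have Bc: "B \<in> carrier_mat n n" using cB rB by auto
  have "mat_inv n A = B" by (rule mat_inv_eq[OF Ac Bc AB])
  thus "mat_inv n A \<in> carrier_mat n n" "A * mat_inv n A = 1\<^sub>m n" "mat_inv n A * A = 1\<^sub>m n"
    "A \<in> carrier_mat n n" using Bc AB BA rB Ac by auto
qed

lemma GL_inv: assumes A: "(A::'a::{finite,field} mat) \<in> GL n"
  shows "mat_inv n A \<in> GL n" "mat_inv n (mat_inv n A) = A"
proof -
  note D = GL_D[OF A]
  show "mat_inv n A \<in> GL n" by (rule GL_I[OF D(1) D(4) D(3)])
  show "mat_inv n (mat_inv n A) = A" by (rule mat_inv_eq[OF D(1) D(4) D(3)])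
qed

lemma GL_mult: assumes A: "(A::'a::{finite,field} mat) \<in> GL n" and B: "B \<in> GL n"
  shows "A * B \<in> GL n" "mat_inv n (A * B) = mat_inv n B * mat_inv n A"
proof -
  note a = GL_D[OF A] and b = GL_D[OF B]
  have e1: "B * (mat_inv n B * mat_inv n A) = mat_inv n A"
    using a b by (simp add: assoc_mult_mat[symmetric, of _ n n _ n _ n])
  have "A * B * (mat_inv n B * mat_inv n A) = A * (B * (mat_inv n B * mat_inv n A))"
    using a b by (intro assoc_mult_mat[of _ n n _ n _ n]) auto
  also have "\<dots> = 1\<^sub>m n" using a b e1 by simp
  finally have e: "A * B * (mat_inv n B * mat_inv n A) = 1\<^sub>m n" .
  have c1: "A * B \<in> carrier_mat n n" "mat_inv n B * mat_inv n A \<in> carrier_mat n n" using a b by auto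
  show "A * B \<in> GL n" by (rule GL_I[OF c1 e])
  show "mat_inv n (A * B) = mat_inv n B * mat_inv n A" by (rule mat_inv_eq[OF c1 e])
qed



lemma UT_inv: assumes A: "(A::'a::{finite,field} mat) \<in> UT n"
  shows "A \<in> GL n" "mat_inv n A \<in> UT n"
proof -
  have Ac: "A \<in> carrier_mat n n" using A by (simp add: UT_def)
  have ut: "upper_triangular A" using A by (auto simp: UT_def upper_triangular_def)
  have "diag_mat A = replicate n 1" using A by (auto simp: UT_def diag_mat_def intro!: nth_equalityI)
  hence "det A = 1" using det_upper_triangular[OF ut Ac] by simp
  hence "A \<in> Units (ring_mat TYPE('a) n ())" using det_non_zero_imp_unit[OF Ac] by simp
  then obtain C where Cc: "C \<in> carrier_mat n n" and AC: "A * C = 1\<^sub>m n" and CA: "C * A = 1\<^sub>m n"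
    unfolding Units_def ring_mat_def by auto
  have inj: "inj_on (\<lambda>X. A * X) (UT n)"
  proof (rule inj_onI)
    fix X Y assume X: "X \<in> UT n" and Y: "Y \<in> UT n" and e: "A * X = A * Y"
    have Xc: "X \<in> carrier_mat n n" and Yc: "Y \<in> carrier_mat n n" using X Y by (auto simp: UT_def)
    have "X = C * A * X" using CA Xc by simp
    also have "\<dots> = C * (A * Y)" using e Cc Ac Xc by (simp add: assoc_mult_mat[of _ n n _ n _ n])
    also have "\<dots> = C * A * Y" using Cc Ac Yc by (simp add: assoc_mult_mat[of _ n n _ n _ n])
    finally show "X = Y" using CA Yc by simp
  qed
  have "(\<lambda>X. A * X) ` UT n \<subseteq> UT n" using A UT_mult by blast
  hence "(\<lambda>X. A * X) ` UT n = UT n" using endo_inj_surj[OF finite_UT _ inj] by blast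
  then obtain B where B: "B \<in> UT n" and AB: "A * B = 1\<^sub>m n"
    using UT_one[of n] by (metis imageE)
  have Bc: "B \<in> carrier_mat n n" using B by (simp add: UT_def)
  show "A \<in> GL n" by (rule GL_I[OF Ac Bc AB])
  show "mat_inv n A \<in> UT n" using mat_inv_eq[OF Ac Bc AB] B by simp
qed



lemma UT_dagger: assumes A: "A \<in> UT n" shows "dagger n A \<in> UT n"
  using A by (auto simp: UT_def)

lemma UT_dagger_iff: assumes A: "A \<in> carrier_mat n n" shows "(dagger n A \<in> UT n) = (A \<in> UT n)"
  using UT_dagger[of A n] UT_dagger[of "dagger n A" n] dagger_dagger[OF A] by auto

lemma cf_zero: "\<psi> \<in> cf n \<Longrightarrow> A \<notin> UT n \<Longrightarrow> \<psi> A = 0" by (simp add: cf_def)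

lemma cf_conj: "\<psi> \<in> cf n \<Longrightarrow> g \<in> UT n \<Longrightarrow> h \<in> UT n \<Longrightarrow> \<psi> (h * g * mat_inv n h) = \<psi> g"
  by (simp add: cf_def)

lemma dual_eq: assumes "\<psi> \<in> cf n" "A \<in> carrier_mat n n" shows "dual n \<psi> A = \<psi> (dagger n A)"
  using assms UT_dagger_iff[of A n] by (auto simp: dual_def cf_def)

lemma UT_invs: assumes h: "(h::'a::{finite,field} mat) \<in> UT n"
  shows "mat_inv n h \<in> UT n" "h * mat_inv n h = 1\<^sub>m n" "mat_inv n h * h = 1\<^sub>m n"
    "h \<in> carrier_mat n n" "mat_inv n h \<in> carrier_mat n n"
  using UT_inv[OF h] GL_D[of h n] UT_carrier by auto

lemma cf_comm: assumes psi: "\<psi> \<in> cf n" and x: "(x::'a::{finite,field} mat) \<in> UT n" and y: "y \<in> UT n"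
  shows "\<psi> (x * y) = \<psi> (y * x)"
proof -
  note yi = UT_invs[OF y]
  have xc: "x \<in> carrier_mat n n" using UT_carrier[OF x] .
  have "y * (x * y) * mat_inv n y = y * x * (y * mat_inv n y)"
    using xc yi by (simp add: assoc_mult_mat[of _ n n _ n _ n])
  also have "\<dots> = y * x" using xc yi by simp
  finally have "y * (x * y) * mat_inv n y = y * x" .
  with cf_conj[OF psi UT_mult[OF x y] y] show ?thesis by simp
qed

lemma dual_cf: assumes psi: "\<psi> \<in> (cf n :: ('a::{finite,field} mat \<Rightarrow> complex) set)"
  shows "dual n \<psi> \<in> cf n"
proof -
  have "dual n \<psi> (h * g * mat_inv n h) = dual n \<psi> g" if g: "g \<in> UT n" and h: "h \<in> UT n" for g h
  proof -
    note hi = UT_invs[OF h]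
    have gc: "g \<in> carrier_mat n n" using UT_carrier[OF g] .
    let ?hi = "mat_inv n h"
    have m: "h * g * ?hi \<in> carrier_mat n n" using gc hi by auto
    have "dagger n (h * g * ?hi) = dagger n ?hi * dagger n (h * g)"
      using gc hi by (intro dagger_mult) auto
    also have "\<dots> = dagger n ?hi * (dagger n g * dagger n h)"
      using gc hi by (simp add: dagger_mult)
    also have "\<dots> = dagger n ?hi * dagger n g * dagger n h"
      using assoc_mult_mat[OF dagger_carrier dagger_carrier dagger_carrier, of n ?hi g h] by simp
    finally have e1: "dagger n (h * g * ?hi) = dagger n ?hi * dagger n g * dagger n h" .
    have "dagger n ?hi * dagger n h = dagger n (h * ?hi)" using hi by (intro dagger_mult[symmetric]) auto
    also have "\<dots> = 1\<^sub>m n" using hi by simp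
    finally have "mat_inv n (dagger n ?hi) = dagger n h"
      by (intro mat_inv_eq) auto
    hence "dual n \<psi> (h * g * ?hi) = \<psi> (dagger n ?hi * dagger n g * mat_inv n (dagger n ?hi))"
      using dual_eq[OF psi m] e1 by simp
    also have "\<dots> = \<psi> (dagger n g)"
      using cf_conj[OF psi UT_dagger[OF g] UT_dagger[OF hi(1)]] .
    also have "\<dots> = dual n \<psi> g" using dual_eq[OF psi gc] by simp
    finally show ?thesis .
  qed
  thus ?thesis unfolding cf_def by (auto simp: dual_def)
qed

lemma dual_dual: assumes psi: "\<psi> \<in> cf n" shows "dual n (dual n \<psi>) = \<psi>"
proof
  fix A show "dual n (dual n \<psi>) A = \<psi> A"
  proof (cases "A \<in> UT n")
    case True
    hence "A \<in> carrier_mat n n" by (rule UT_carrier)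
    hence dd: "dagger n (dagger n A) = A" by (rule dagger_dagger)
    thus ?thesis using True UT_dagger[OF True] by (simp add: dual_def)
  next
    case False thus ?thesis using psi by (simp add: dual_def cf_def)
  qed
qed

lemma part1: "bij_betw (dual n) (cf n :: ('a::{finite,field} mat \<Rightarrow> complex) set) (cf n)"
  by (rule bij_betw_byWitness[where f' = "dual n"]) (auto simp: dual_dual dual_cf)

lemma part2: "mu a b (dual2 a b \<Phi>) = dual (a + b) (mu b a (swapf \<Phi>))"
proof
  fix g :: "'a::{finite,field} mat"
  show "mu a b (dual2 a b \<Phi>) g = dual (a + b) (mu b a (swapf \<Phi>)) g"
  proof (cases "g \<in> UT (a + b)")
    case False thus ?thesis by (simp add: mu_def dual_def)
  next
    case True
    let ?T = "mat a a (\<lambda>(i,j). g $$ (i,j))" and ?B = "mat b b (\<lambda>(i,j). g $$ (a + i, a + j))"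
    let ?d = "dagger (a + b) g"
    have gd: "?d \<in> UT (a + b)" using UT_dagger[OF True] .
    have T: "?T \<in> UT a" using True by (auto simp: UT_def)
    have B: "?B \<in> UT b" using True by (auto simp: UT_def)
    have e1: "mat a a (\<lambda>(i,j). ?d $$ (b + i, b + j)) = dagger a ?T"
      by (rule eq_matI) (auto simp: algebra_simps)
    have e2: "mat b b (\<lambda>(i,j). ?d $$ (i, j)) = dagger b ?B"
      by (rule eq_matI) (auto simp: algebra_simps intro!: arg_cong[where f = "\<lambda>p. g $$ p"])
    show ?thesis using True gd T B e1 e2
      by (simp add: mu_def dual_def dual2_def swapf_def add.commute[of b a])
  qed
qed



lemma transpose_diag_block_mat:
  "transpose_mat (diag_block_mat As) = diag_block_mat (map transpose_mat As)"
proof (induct As)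
  case Nil show ?case by auto
next
  case (Cons A As)
  let ?B = "diag_block_mat As"
  have "transpose_mat (diag_block_mat (A # As)) =
     transpose_mat (four_block_mat A (0\<^sub>m (dim_row A) (dim_col ?B)) (0\<^sub>m (dim_row ?B) (dim_col A)) ?B)"
    by (simp add: Let_def)
  also have "\<dots> = four_block_mat (transpose_mat A) (0\<^sub>m (dim_col A) (dim_row ?B))
      (0\<^sub>m (dim_col ?B) (dim_row A)) (transpose_mat ?B)"
    by (subst transpose_four_block_mat[of _ "dim_row A" "dim_col A" _ "dim_col ?B" _ "dim_row ?B"]) auto
  also have "\<dots> = diag_block_mat (map transpose_mat (A # As))"
    by (simp add: Let_def Cons[symmetric])
  finally show ?case .
qed

lemma similar_mat_transpose: assumes "similar_mat (A::'a::comm_ring_1 mat) B"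
  shows "similar_mat (transpose_mat A) (transpose_mat B)"
proof -
  from similar_matD[OF assms] obtain n P Q where c: "{A,B,P,Q} \<subseteq> carrier_mat n n"
    and PQ: "P * Q = 1\<^sub>m n" and QP: "Q * P = 1\<^sub>m n" and A: "A = P * B * Q" by blast
  have "transpose_mat (P * B * Q) = transpose_mat Q * transpose_mat (P * B)"
    using c by (intro transpose_mult) auto
  also have "\<dots> = transpose_mat Q * (transpose_mat B * transpose_mat P)"
    using c by (simp add: transpose_mult[of P n n B n])
  also have "\<dots> = transpose_mat Q * transpose_mat B * transpose_mat P"
    using c by (intro assoc_mult_mat[symmetric, of _ n n _ n _ n]) auto
  finally have "transpose_mat A = transpose_mat Q * transpose_mat B * transpose_mat P"
    using A by simp
  moreover have "transpose_mat Q * transpose_mat P = 1\<^sub>m n"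
    using c by (metis PQ insert_subset transpose_mult transpose_one)
  moreover have "transpose_mat P * transpose_mat Q = 1\<^sub>m n"
    using c by (metis QP insert_subset transpose_mult transpose_one)
  ultimately show ?thesis using c by (intro similar_matI[where n = n]) auto
qed

lemma rev_conj: assumes A: "(A::'a::comm_ring_1 mat) \<in> carrier_mat n n"
  shows "rev_mat n * A * rev_mat n = mat n n (\<lambda>(i,j). A $$ (n - 1 - i, n - 1 - j))"
proof -
  have "rev_mat n * A = mat n n (\<lambda>(i,j). A $$ (n - 1 - i, j))" by (rule rev_mat_L[OF A])
  moreover have "mat n n (\<lambda>(i,j). A $$ (n - 1 - i, j)) * rev_mat n = mat n n (\<lambda>(i,j). A $$ (n - 1 - i, n - 1 - j))"
    by (subst rev_mat_R[of _ n n]) (auto intro!: eq_matI)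
  ultimately show ?thesis by simp
qed

lemma jordan_block_transpose_similar:
  "similar_mat (transpose_mat (jordan_block m (a::'a::comm_ring_1))) (jordan_block m a)"
proof (rule similar_matI[where n = m and P = "rev_mat m" and Q = "rev_mat m"])
  show "transpose_mat (jordan_block m a) = rev_mat m * jordan_block m a * rev_mat m"
    by (subst rev_conj[of _ m]) (auto intro!: eq_matI)
qed (auto simp: rev_rev)

lemma jordan_matrix_transpose_similar:
  "similar_mat (transpose_mat (jordan_matrix n_as)) (jordan_matrix (n_as :: (nat \<times> 'a::comm_ring_1) list))"
proof -
  let ?Ms = "map (\<lambda>(m,a). (transpose_mat (jordan_block m a), jordan_block m a)) n_as"
  have s: "similar_mat (diag_block_mat (map fst ?Ms)) (diag_block_mat (map snd ?Ms))"
    by (rule similar_diag_mat_block_mat) (auto simp: jordan_block_transpose_similar)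
  have e1: "map fst ?Ms = map transpose_mat (map (\<lambda>(m,a). jordan_block m a) n_as)"
    by (induct n_as) auto
  have e2: "map snd ?Ms = map (\<lambda>(m,a). jordan_block m a) n_as"
    by (induct n_as) auto
  show ?thesis
    unfolding jordan_matrix_def transpose_diag_block_mat using s unfolding e1 e2 .
qed

lemma sim_to_conj: assumes s: "similar_mat A B" and A: "(A::'a::{finite,field} mat) \<in> carrier_mat n n"
  shows "\<exists>z\<in>GL n. A = z * B * mat_inv n z"
proof -
  from similar_matD[OF s] obtain m P Q where c: "{A,B,P,Q} \<subseteq> carrier_mat m m"
    and PQ: "P * Q = 1\<^sub>m m" and QP: "Q * P = 1\<^sub>m m" and e: "A = P * B * Q" by blast
  have "m = n" using c A by auto
  hence c: "{A,B,P,Q} \<subseteq> carrier_mat n n" and PQ: "P * Q = 1\<^sub>m n" using c PQ by auto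
  have "P \<in> GL n" using c PQ by (intro GL_I[of _ n Q]) auto
  moreover have "mat_inv n P = Q" using c PQ by (intro mat_inv_eq) auto
  ultimately show ?thesis using e by auto
qed

lemma UT_dagger_conj: assumes u: "(u::'a::{finite,field} mat) \<in> UT n"
  shows "\<exists>z\<in>GL n. dagger n u = z * u * mat_inv n z"
proof -
  have uc: "u \<in> carrier_mat n n" using UT_carrier[OF u] .
  have ut: "upper_triangular u" using u by (auto simp: UT_def upper_triangular_def)
  from triangular_to_jnf_vector[OF uc ut] obtain n_as where
    "similar_mat u (jordan_matrix n_as)" unfolding jordan_nf_def by blast
  hence s1: "similar_mat (transpose_mat u) (jordan_matrix n_as)"
    using similar_mat_trans[OF similar_mat_transpose jordan_matrix_transpose_similar] by blast
  have s0: "similar_mat (dagger n u) (transpose_mat u)"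
    using uc by (intro similar_matI[where n = n and P = "rev_mat n" and Q = "rev_mat n"]) (auto simp: dagger_alt rev_rev)
  have "similar_mat (dagger n u) u"
    using similar_mat_trans[OF s0 similar_mat_trans[OF s1 similar_mat_sym]]
      \<open>similar_mat u (jordan_matrix n_as)\<close> by blast
  thus ?thesis by (rule sim_to_conj) simp
qed



lemma mult_cnn[simp]: "A \<in> carrier_mat n n \<Longrightarrow> B \<in> carrier_mat n n \<Longrightarrow> A * B \<in> carrier_mat n n"
  by auto

lemma dagger3: assumes "(A::'a::comm_ring_1 mat) \<in> carrier_mat n n" "B \<in> carrier_mat n n" "C \<in> carrier_mat n n"
  shows "dagger n (A * B * C) = dagger n C * dagger n B * dagger n A"
proof -
  have "dagger n (A * B * C) = dagger n C * dagger n (A * B)" using assms by (intro dagger_mult) auto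
  also have "\<dots> = dagger n C * (dagger n B * dagger n A)" using assms by (simp add: dagger_mult)
  also have "\<dots> = dagger n C * dagger n B * dagger n A"
    using assoc_mult_mat[OF dagger_carrier dagger_carrier dagger_carrier, of n C B A] by simp
  finally show ?thesis .
qed

lemma GL_carrier: "A \<in> GL n \<Longrightarrow> A \<in> carrier_mat n n" by (simp add: GL_def)

lemma GL_cancel[simp]: assumes y: "(y::'a::{finite,field} mat) \<in> GL n" and X: "X \<in> carrier_mat n n"
  shows "mat_inv n y * (y * X) = X" "y * (mat_inv n y * X) = X"
proof -
  note d = GL_D[OF y]
  have "mat_inv n y * (y * X) = (mat_inv n y * y) * X" using d X by (intro assoc_mult_mat[symmetric]) auto
  thus "mat_inv n y * (y * X) = X" using d X by (simp del: assoc_mult_mat)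
  have "y * (mat_inv n y * X) = (y * mat_inv n y) * X" using d X by (intro assoc_mult_mat[symmetric]) auto
  thus "y * (mat_inv n y * X) = X" using d X by (simp del: assoc_mult_mat)
qed

lemma GL_dagger: assumes x: "(x::'a::{finite,field} mat) \<in> GL n"
  shows "dagger n x \<in> GL n" "mat_inv n (dagger n x) = dagger n (mat_inv n x)"
proof -
  note d = GL_D[OF x]
  have e: "dagger n x * dagger n (mat_inv n x) = 1\<^sub>m n"
    using d dagger_mult[of "mat_inv n x" n x, symmetric] by simp
  show "dagger n x \<in> GL n" by (rule GL_I[OF dagger_carrier dagger_carrier e])
  show "mat_inv n (dagger n x) = dagger n (mat_inv n x)" by (rule mat_inv_eq[OF dagger_carrier dagger_carrier e])
qed

definition Ssum :: "nat \<Rightarrow> (('a::{finite,field}) mat \<Rightarrow> complex) \<Rightarrow> 'a mat \<Rightarrow> complex" where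
  "Ssum n \<psi> g = (\<Sum>y\<in>GL n. \<psi> (y * g * mat_inv n y))"

lemma ind_alt: assumes g: "(g::'a::{finite,field} mat) \<in> GL n"
  shows "ind n \<psi> g = (1 / of_nat (card (UT n :: 'a mat set))) * Ssum n \<psi> g"
proof -
  have "(\<Sum>x\<in>GL n. \<psi> (mat_inv n x * g * x)) = Ssum n \<psi> g"
    unfolding Ssum_def
    by (rule sum.reindex_bij_witness[where i = "mat_inv n" and j = "mat_inv n"]) (auto simp: GL_inv)
  thus ?thesis using g by (simp add: ind_def)
qed

lemma ind_dual: assumes psi: "\<psi> \<in> cf n" and g: "(g::'a::{finite,field} mat) \<in> GL n"
  shows "ind n (dual n \<psi>) g = (1 / of_nat (card (UT n :: 'a mat set))) * Ssum n \<psi> (dagger n g)"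
proof -
  have gc: "g \<in> carrier_mat n n" using GL_carrier[OF g] .
  have "(\<Sum>x\<in>GL n. dual n \<psi> (mat_inv n x * g * x)) = (\<Sum>x\<in>GL n. \<psi> (dagger n x * dagger n g * mat_inv n (dagger n x)))"
  proof (rule sum.cong[OF refl])
    fix x :: "'a mat" assume x: "x \<in> GL n"
    note d = GL_D[OF x]
    have "dual n \<psi> (mat_inv n x * g * x) = \<psi> (dagger n (mat_inv n x * g * x))"
      using d gc by (intro dual_eq[OF psi]) auto
    also have "\<dots> = \<psi> (dagger n x * dagger n g * dagger n (mat_inv n x))"
      using d gc dagger3[of "mat_inv n x" n g x] by (simp del: assoc_mult_mat)
    finally show "dual n \<psi> (mat_inv n x * g * x) = \<psi> (dagger n x * dagger n g * mat_inv n (dagger n x))"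
      using GL_dagger[OF x] by simp
  qed
  also have "\<dots> = Ssum n \<psi> (dagger n g)"
    unfolding Ssum_def
    by (rule sum.reindex_bij_witness[where i = "dagger n" and j = "dagger n"])
       (auto simp: GL_dagger dagger_dagger GL_carrier)
  finally show ?thesis using g by (simp add: ind_def)
qed

lemma Ssum_conj: assumes z: "(z::'a::{finite,field} mat) \<in> GL n" and g: "g \<in> carrier_mat n n"
  shows "Ssum n \<psi> (z * g * mat_inv n z) = Ssum n \<psi> g"
  unfolding Ssum_def
proof (rule sum.reindex_bij_witness[where j = "\<lambda>a. a * z" and i = "\<lambda>b. b * mat_inv n z"])
  note d = GL_D[OF z]
  fix a :: "'a mat" assume a: "a \<in> GL n"
  note da = GL_D[OF a]
  show "a * z * mat_inv n z = a" using da d by (simp add: assoc_mult_mat[of _ n n _ n _ n])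
  show "a * z \<in> GL n" using GL_mult[OF a z] by simp
  show "\<psi> (a * z * g * mat_inv n (a * z)) = \<psi> (a * (z * g * mat_inv n z) * mat_inv n a)"
    using GL_mult(2)[OF a z] da d g by (simp add: assoc_mult_mat[of _ n n _ n _ n])
next
  note d = GL_D[OF z]
  fix b :: "'a mat" assume b: "b \<in> GL n"
  note db = GL_D[OF b]
  show "b * mat_inv n z * z = b" using db d by (simp add: assoc_mult_mat[of _ n n _ n _ n])
  show "b * mat_inv n z \<in> GL n" using GL_mult[OF b GL_inv(1)[OF z]] by simp
qed

lemma Ssum_zero: assumes psi: "\<psi> \<in> cf n" and h: "\<forall>y\<in>GL n. y * g * mat_inv n y \<notin> UT n"
  shows "Ssum n \<psi> g = 0"
  unfolding Ssum_def using h cf_zero[OF psi] by (intro sum.neutral) auto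

lemma Ssum_dagger: assumes psi: "\<psi> \<in> cf n" and g: "(g::'a::{finite,field} mat) \<in> carrier_mat n n"
  shows "Ssum n \<psi> (dagger n g) = Ssum n \<psi> g"
proof (cases "\<exists>y\<in>GL n. y * g * mat_inv n y \<in> UT n")
  case True
  then obtain y where y: "y \<in> GL n" and u: "y * g * mat_inv n y \<in> UT n" by blast
  define u where "u = y * g * mat_inv n y"
  note d = GL_D[OF y]
  have uc: "u \<in> carrier_mat n n" using d g unfolding u_def by simp
  have gu: "g = mat_inv n y * u * y" unfolding u_def using d g y
    by (simp add: assoc_mult_mat[of _ n n _ n _ n])
  have S1: "Ssum n \<psi> g = Ssum n \<psi> u"
    using Ssum_conj[OF GL_inv(1)[OF y] uc] GL_inv(2)[OF y] gu by simp
  have "dagger n g = dagger n y * dagger n u * dagger n (mat_inv n y)"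
    using gu d uc dagger3[of "mat_inv n y" n u y] by (simp del: assoc_mult_mat)
  also have "\<dots> = dagger n y * dagger n u * mat_inv n (dagger n y)" using GL_dagger[OF y] by simp
  finally have "Ssum n \<psi> (dagger n g) = Ssum n \<psi> (dagger n u)"
    using Ssum_conj[OF GL_dagger(1)[OF y] dagger_carrier] by simp
  also obtain z where z: "z \<in> GL n" and zu: "dagger n u = z * u * mat_inv n z"
    using UT_dagger_conj[OF u[folded u_def]] by blast
  hence "Ssum n \<psi> (dagger n u) = Ssum n \<psi> u" using Ssum_conj[OF z uc] by simp
  finally show ?thesis using S1 by simp
next
  case False
  have "\<forall>y\<in>GL n. y * dagger n g * mat_inv n y \<notin> UT n"
  proof (intro ballI notI)
    fix y assume y: "y \<in> GL n" and m: "y * dagger n g * mat_inv n y \<in> UT n"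
    note d = GL_D[OF y]
    let ?k = "dagger n (mat_inv n y)"
    have k: "?k \<in> GL n" using GL_dagger(1)[OF GL_inv(1)[OF y]] .
    have mk: "mat_inv n ?k = dagger n y"
      using GL_dagger(2)[OF GL_inv(1)[OF y]] GL_inv(2)[OF y] by simp
    have "dagger n (y * dagger n g * mat_inv n y) = ?k * dagger n (dagger n g) * dagger n y"
      using d by (simp add: dagger3)
    also have "\<dots> = ?k * g * mat_inv n ?k" using mk dagger_dagger[OF g] by simp
    finally have "?k * g * mat_inv n ?k \<in> UT n" using UT_dagger[OF m] by simp
    thus False using False k by blast
  qed
  thus ?thesis using Ssum_zero[OF psi] False by simp
qed

lemma part4: assumes psi: "\<psi> \<in> (cf n :: ('a::{finite,field} mat \<Rightarrow> complex) set)"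
  shows "ind n (dual n \<psi>) = ind n \<psi>"
proof
  fix g :: "'a mat"
  show "ind n (dual n \<psi>) g = ind n \<psi> g"
  proof (cases "g \<in> GL n")
    case True
    thus ?thesis using ind_dual[OF psi True] ind_alt[OF True] Ssum_dagger[OF psi GL_carrier[OF True]]
      by simp
  next
    case False thus ?thesis by (simp add: ind_def)
  qed
qed



lemma cano_less_mono: assumes K: "finite K" and x: "x \<in> K" and y: "y \<in> K" and xy: "x < y"
  shows "cano K x < cano K y"
  unfolding cano_def
proof (rule psubset_card_mono)
  show "finite {k \<in> K. k < y}" using K by simp
  show "{k \<in> K. k < x} \<subset> {k \<in> K. k < y}" using x xy by auto
qed

lemma cano_lt_card: assumes K: "finite K" and x: "x \<in> K" shows "cano K x < card K"
  unfolding cano_def by (rule psubset_card_mono) (use K x in auto)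

lemma cano_bij: assumes K: "finite K" shows "bij_betw (cano K) K {0..<card K}"
proof -
  have inj: "inj_on (cano K) K"
  proof (rule inj_onI)
    fix x y assume x: "x \<in> K" and y: "y \<in> K" and e: "cano K x = cano K y"
    show "x = y"
    proof (rule ccontr)
      assume "x \<noteq> y"
      then consider "x < y" | "y < x" by linarith
      thus False using cano_less_mono[OF K x y] cano_less_mono[OF K y x] e by cases auto
    qed
  qed
  have sub: "cano K ` K \<subseteq> {0..<card K}" using cano_lt_card[OF K] by auto
  have "card (cano K ` K) = card {0..<card K}" using card_image[OF inj] by simp
  hence "cano K ` K = {0..<card K}" using card_subset_eq[OF _ sub] by simp
  thus ?thesis using inj by (simp add: bij_betw_def)
qed

definition ee :: "nat set \<Rightarrow> nat \<Rightarrow> nat" where "ee K = inv_into K (cano K)"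

lemma ee_props: assumes K: "finite K"
  shows "\<And>i. i < card K \<Longrightarrow> ee K i \<in> K"
    "\<And>i. i < card K \<Longrightarrow> cano K (ee K i) = i"
    "\<And>x. x \<in> K \<Longrightarrow> ee K (cano K x) = x"
proof -
  note b = cano_bij[OF K]
  fix i assume i: "i < card K"
  hence "i \<in> cano K ` K" using b by (simp add: bij_betw_def)
  thus "ee K i \<in> K" "cano K (ee K i) = i" unfolding ee_def
    by (auto intro: inv_into_into f_inv_into_f)
next
  note b = cano_bij[OF K]
  fix x assume "x \<in> K"
  thus "ee K (cano K x) = x" unfolding ee_def using b by (simp add: bij_betw_def inv_into_f_f)
qed

lemma ee_mono: assumes K: "finite K" and i: "i < card K" and j: "j < card K" and ij: "i < j"
  shows "ee K i < ee K j"
proof (rule ccontr)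
  assume "\<not> ee K i < ee K j"
  hence "ee K j < ee K i \<or> ee K j = ee K i" by linarith
  thus False
  proof
    assume "ee K j < ee K i"
    from cano_less_mono[OF K ee_props(1)[OF K j] ee_props(1)[OF K i] this]
    show False using ee_props(2)[OF K i] ee_props(2)[OF K j] ij by simp
  next
    assume "ee K j = ee K i"
    hence "cano K (ee K j) = cano K (ee K i)" by simp
    thus False using ee_props(2)[OF K i] ee_props(2)[OF K j] ij by simp
  qed
qed

lemma card_gt: assumes K: "finite K" and x: "x \<in> K"
  shows "card {k \<in> K. x < k} = card K - 1 - cano K x"
proof -
  have "K = {k \<in> K. k < x} \<union> insert x {k \<in> K. x < k}" using x by auto
  hence "card K = card {k \<in> K. k < x} + card (insert x {k \<in> K. x < k})"
    using K by (metis (no_types, lifting) card_Un_disjoint disjoint_iff finite_Un insertE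
        mem_Collect_eq order_less_asym)
  also have "card (insert x {k \<in> K. x < k}) = Suc (card {k \<in> K. x < k})"
    using K by (intro card_insert_disjoint) auto
  finally show ?thesis unfolding cano_def by simp
qed

lemma rev_inj: "inj_on (\<lambda>k. n - 1 - k) {0..<(n::nat)}"
proof (rule inj_onI)
  fix x y assume "x \<in> {0..<n}" "y \<in> {0..<n}" and e: "n - 1 - x = n - 1 - y"
  hence "x < n" "y < n" by auto
  with e show "x = y" by arith
qed

lemma card_rev: assumes "K \<subseteq> {0..<(n::nat)}" shows "card ((\<lambda>k. n - 1 - k) ` K) = card K"
  by (rule card_image, rule inj_on_subset[OF rev_inj assms])

lemma ee_rev: assumes Kn: "K \<subseteq> {0..<n}" and i: "i < card K"
  shows "ee ((\<lambda>k. n - 1 - k) ` K) i = n - 1 - ee K (card K - 1 - i)"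
proof -
  have K: "finite K" using Kn finite_subset by blast
  let ?L = "(\<lambda>k. n - 1 - k) ` K"
  have L: "finite ?L" using K by simp
  define x where "x = ee K (card K - 1 - i)"
  have x: "x \<in> K" unfolding x_def using i by (intro ee_props(1)[OF K]) simp
  have cx: "cano K x = card K - 1 - i" unfolding x_def using i by (intro ee_props(2)[OF K]) simp
  have xn: "x < n" using x Kn by auto
  have y: "n - 1 - x \<in> ?L" using x by simp
  have set_eq: "{k \<in> ?L. k < n - 1 - x} = (\<lambda>k. n - 1 - k) ` {k \<in> K. x < k}"
  proof
    show "{k \<in> ?L. k < n - 1 - x} \<subseteq> (\<lambda>k. n - 1 - k) ` {k \<in> K. x < k}"
    proof
      fix k assume "k \<in> {k \<in> ?L. k < n - 1 - x}"
      then obtain k' where k': "k' \<in> K" "k = n - 1 - k'" "n - 1 - k' < n - 1 - x" by auto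
      have "k' < n" using k' Kn by auto
      hence "x < k'" using k'(3) xn by arith
      thus "k \<in> (\<lambda>k. n - 1 - k) ` {k \<in> K. x < k}" using k' by auto
    qed
  next
    show "(\<lambda>k. n - 1 - k) ` {k \<in> K. x < k} \<subseteq> {k \<in> ?L. k < n - 1 - x}"
    proof
      fix k assume "k \<in> (\<lambda>k. n - 1 - k) ` {k \<in> K. x < k}"
      then obtain k' where k': "k' \<in> K" "k = n - 1 - k'" "x < k'" by auto
      have "k' < n" using k' Kn by auto
      thus "k \<in> {k \<in> ?L. k < n - 1 - x}" using k' xn by auto
    qed
  qed
  have "cano ?L (n - 1 - x) = card ((\<lambda>k. n - 1 - k) ` {k \<in> K. x < k})"
    unfolding cano_def set_eq ..
  also have "\<dots> = card {k \<in> K. x < k}"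
    by (rule card_image, rule inj_on_subset[OF rev_inj]) (use Kn in auto)
  also have "\<dots> = i" using card_gt[OF K x] cx i by simp
  finally have "cano ?L (n - 1 - x) = i" .
  hence "ee ?L i = n - 1 - x" using ee_props(3)[OF L y] by simp
  thus ?thesis unfolding x_def .
qed

definition Jc :: "nat \<Rightarrow> nat set \<Rightarrow> nat set" where
  "Jc n I = (\<lambda>k. n - 1 - k) ` ({0..<n} - I)"

lemma Jc_sub: "Jc n I \<subseteq> {0..<n}" by (auto simp: Jc_def)

lemma Jc_mem: assumes r: "r < n" shows "(r \<in> Jc n I) = (n - 1 - r \<notin> I)"
proof
  assume "r \<in> Jc n I"
  then obtain k where k: "k < n" "k \<notin> I" "r = n - 1 - k" by (auto simp: Jc_def)
  hence "n - 1 - r = k" by arith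
  thus "n - 1 - r \<notin> I" using k by simp
next
  assume a: "n - 1 - r \<notin> I"
  show "r \<in> Jc n I" unfolding Jc_def
  proof (rule image_eqI[where x = "n - 1 - r"])
    show "r = n - 1 - (n - 1 - r)" using r by arith
    show "n - 1 - r \<in> {0..<n} - I" using a r by auto
  qed
qed

lemma Jc_card: assumes I: "I \<subseteq> {0..<n}" shows "card (Jc n I) = n - card I"
proof -
  have "card (Jc n I) = card ({0..<n} - I)" unfolding Jc_def by (rule card_rev) auto
  also have "\<dots> = n - card I" using I by (simp add: card_Diff_subset finite_subset)
  finally show ?thesis .
qed

lemma Jc_compl: assumes I: "I \<subseteq> {0..<n}" shows "{0..<n} - Jc n I = (\<lambda>k. n - 1 - k) ` I"
proof
  show "{0..<n} - Jc n I \<subseteq> (\<lambda>k. n - 1 - k) ` I"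
  proof
    fix r assume r: "r \<in> {0..<n} - Jc n I"
    hence "n - 1 - r \<in> I" using Jc_mem[of r n I] by auto
    moreover have "r = n - 1 - (n - 1 - r)" using r by auto
    ultimately show "r \<in> (\<lambda>k. n - 1 - k) ` I" by blast
  qed
next
  show "(\<lambda>k. n - 1 - k) ` I \<subseteq> {0..<n} - Jc n I"
  proof
    fix r assume "r \<in> (\<lambda>k. n - 1 - k) ` I"
    then obtain k where k: "k \<in> I" "r = n - 1 - k" by auto
    have kn: "k < n" using k I by auto
    hence rn: "r < n" using k by auto
    have "n - 1 - r = k" using k kn by auto
    thus "r \<in> {0..<n} - Jc n I" using Jc_mem[OF rn, of I] k rn by auto
  qed
qed

lemma Jc_Jc: assumes I: "I \<subseteq> {0..<n}" shows "Jc n (Jc n I) = I"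
proof -
  have "Jc n (Jc n I) = (\<lambda>k. n - 1 - k) ` ((\<lambda>k. n - 1 - k) ` I)"
    unfolding Jc_def[of n "Jc n I"] Jc_compl[OF I] ..
  also have "\<dots> = I"
  proof -
    have "\<And>k. k \<in> I \<Longrightarrow> n - 1 - (n - 1 - k) = k" using I by auto
    thus ?thesis by (force simp: image_image)
  qed
  finally show ?thesis .
qed



lemma st_ee: "st n I g = (mat (card I) (card I) (\<lambda>(i,j). g $$ (ee I i, ee I j)),
   mat (card ({0..<n} - I)) (card ({0..<n} - I)) (\<lambda>(i,j). g $$ (ee ({0..<n} - I) i, ee ({0..<n} - I) j)))"
  by (simp add: st_def ee_def Let_def)

lemma ee_lt: assumes K: "K \<subseteq> {0..<n}" and i: "i < card K" shows "ee K i < n"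
proof -
  have "finite K" using K finite_subset by blast
  from ee_props(1)[OF this i] K show ?thesis by auto
qed

lemma block_dagger: assumes K: "K \<subseteq> {0..<n}"
  shows "mat (card ((\<lambda>k. n - 1 - k) ` K)) (card ((\<lambda>k. n - 1 - k) ` K))
           (\<lambda>(i,j). dagger n g $$ (ee ((\<lambda>k. n - 1 - k) ` K) i, ee ((\<lambda>k. n - 1 - k) ` K) j))
       = dagger (card K) (mat (card K) (card K) (\<lambda>(i,j). g $$ (ee K i, ee K j)))"
proof -
  let ?L = "(\<lambda>k. n - 1 - k) ` K"
  have cL: "card ?L = card K" by (rule card_rev[OF K])
  have cL': "card ((\<lambda>x. n - Suc x) ` K) = card K" using cL by simp
  show ?thesis
  proof (rule eq_matI)
    fix i j assume i: "i < dim_row (dagger (card K) (mat (card K) (card K) (\<lambda>(i,j). g $$ (ee K i, ee K j))))"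
      and j: "j < dim_col (dagger (card K) (mat (card K) (card K) (\<lambda>(i,j). g $$ (ee K i, ee K j))))"
    hence i: "i < card K" and j: "j < card K" by auto
    have ei: "ee ?L i = n - 1 - ee K (card K - 1 - i)" by (rule ee_rev[OF K i])
    have ej: "ee ?L j = n - 1 - ee K (card K - 1 - j)" by (rule ee_rev[OF K j])
    have li: "ee K (card K - 1 - i) < n" by (rule ee_lt[OF K]) (use i in auto)
    have lj: "ee K (card K - 1 - j) < n" by (rule ee_lt[OF K]) (use j in auto)
    have i1: "card K - 1 - i < card K" "card K - 1 - j < card K" using i j by auto
    show "mat (card ?L) (card ?L) (\<lambda>(i,j). dagger n g $$ (ee ?L i, ee ?L j)) $$ (i,j)
        = dagger (card K) (mat (card K) (card K) (\<lambda>(i,j). g $$ (ee K i, ee K j))) $$ (i,j)"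
      using i j cL ei ej li lj i1 by simp
  qed (auto simp: cL cL')
qed

lemma st_dagger: assumes I: "I \<subseteq> {0..<n}"
  shows "st n (Jc n I) (dagger n g) = (dagger (n - card I) (snd (st n I g)), dagger (card I) (fst (st n I g)))"
proof -
  let ?K = "{0..<n} - I"
  have K: "?K \<subseteq> {0..<n}" by auto
  have cK: "card ?K = n - card I" using I by (simp add: card_Diff_subset finite_subset)
  have J: "Jc n I = (\<lambda>k. n - 1 - k) ` ?K" by (simp add: Jc_def)
  have L: "{0..<n} - Jc n I = (\<lambda>k. n - 1 - k) ` I" by (rule Jc_compl[OF I])
  show ?thesis
    unfolding st_ee[of n "Jc n I"] st_ee[of n I] L fst_conv snd_conv
    unfolding J block_dagger[OF K] block_dagger[OF I] cK ..
qed

lemma dagger_minus_one: assumes g: "g \<in> carrier_mat n n" and r: "r < n" and s: "s < n"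
  shows "(dagger n g - 1\<^sub>m n) $$ (r,s) = (g - 1\<^sub>m n) $$ (n - 1 - s, n - 1 - r)"
proof -
  have "(r = s) = (n - 1 - s = n - 1 - r)" using r s by arith
  thus ?thesis using g r s by auto
qed

lemma UL_dagger: assumes I: "I \<subseteq> {0..<n}" and g: "g \<in> UL n I"
  shows "dagger n g \<in> UL n (Jc n I)"
proof -
  have gu: "g \<in> UT n" and gc: "g \<in> carrier_mat n n" and
    c: "\<And>i j. i < n \<Longrightarrow> j < n \<Longrightarrow> (g - 1\<^sub>m n) $$ (i,j) \<noteq> 0 \<Longrightarrow> (i \<in> I \<and> j \<in> I) \<or> (i \<notin> I \<and> j \<notin> I)"
    using g by (auto simp: UL_def UT_def)
  have "(r \<in> Jc n I \<and> s \<in> Jc n I) \<or> (r \<notin> Jc n I \<and> s \<notin> Jc n I)"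
    if r: "r < n" and s: "s < n" and nz: "(dagger n g - 1\<^sub>m n) $$ (r,s) \<noteq> 0" for r s
  proof -
    have "(g - 1\<^sub>m n) $$ (n - 1 - s, n - 1 - r) \<noteq> 0" using nz dagger_minus_one[OF gc r s] by simp
    hence "(n - 1 - s \<in> I \<and> n - 1 - r \<in> I) \<or> (n - 1 - s \<notin> I \<and> n - 1 - r \<notin> I)"
      using c[of "n - 1 - s" "n - 1 - r"] r s by auto
    thus ?thesis using Jc_mem[OF r, of I] Jc_mem[OF s, of I] by auto
  qed
  thus ?thesis using UT_dagger[OF gu] by (auto simp: UL_def)
qed

lemma UR_dagger: assumes I: "I \<subseteq> {0..<n}" and g: "g \<in> UR n I"
  shows "dagger n g \<in> UR n (Jc n I)"
proof -
  have gu: "g \<in> UT n" and gc: "g \<in> carrier_mat n n" and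
    c: "\<And>i j. i < n \<Longrightarrow> j < n \<Longrightarrow> (g - 1\<^sub>m n) $$ (i,j) \<noteq> 0 \<Longrightarrow> i \<in> I \<and> j \<notin> I"
    using g by (auto simp: UR_def UT_def)
  have "r \<in> Jc n I \<and> s \<notin> Jc n I"
    if r: "r < n" and s: "s < n" and nz: "(dagger n g - 1\<^sub>m n) $$ (r,s) \<noteq> 0" for r s
  proof -
    have "(g - 1\<^sub>m n) $$ (n - 1 - s, n - 1 - r) \<noteq> 0" using nz dagger_minus_one[OF gc r s] by simp
    hence "n - 1 - s \<in> I \<and> n - 1 - r \<notin> I" using c[of "n - 1 - s" "n - 1 - r"] r s by auto
    thus ?thesis using Jc_mem[OF r, of I] Jc_mem[OF s, of I] by auto
  qed
  thus ?thesis using UT_dagger[OF gu] by (auto simp: UR_def)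
qed

lemma block_UT: assumes K: "K \<subseteq> {0..<n}" and g: "g \<in> UT n"
  shows "mat (card K) (card K) (\<lambda>(i,j). g $$ (ee K i, ee K j)) \<in> UT (card K)"
proof -
  have Kf: "finite K" using K finite_subset by blast
  have d: "\<And>i. i < n \<Longrightarrow> g $$ (i,i) = 1" and l: "\<And>i j. i < n \<Longrightarrow> j < i \<Longrightarrow> g $$ (i,j) = 0"
    using g by (auto simp: UT_def)
  show ?thesis unfolding UT_def
    using d l ee_lt[OF K] ee_mono[OF Kf] by auto
qed

lemma UL_UT: "g \<in> UL n I \<Longrightarrow> g \<in> UT n" by (simp add: UL_def)
lemma UR_UT: "g \<in> UR n I \<Longrightarrow> g \<in> UT n" by (simp add: UR_def)

lemma DefRes_dual: assumes psi: "\<psi> \<in> (cf n :: ('a::{finite,field} mat \<Rightarrow> complex) set)"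
  and I: "I \<subseteq> {0..<n}" and g: "g \<in> UT n"
  shows "DefRes n I (dual n \<psi>) g = DefRes n (Jc n I) \<psi> (dagger n g)"
proof -
  have JJ: "Jc n (Jc n I) = I" by (rule Jc_Jc[OF I])
  have b: "bij_betw (dagger n) (UR n I :: 'a mat set) (UR n (Jc n I))"
  proof (rule bij_betw_byWitness[where f' = "dagger n"])
    show "\<forall>r\<in>UR n I. dagger n (dagger n r) = (r :: 'a mat)"
      using dagger_dagger UT_carrier UR_UT by blast
    show "\<forall>r\<in>UR n (Jc n I). dagger n (dagger n r) = (r :: 'a mat)"
      using dagger_dagger UT_carrier UR_UT by blast
    show "dagger n ` (UR n I :: 'a mat set) \<subseteq> UR n (Jc n I)" using UR_dagger[OF I] by blast
    show "dagger n ` (UR n (Jc n I) :: 'a mat set) \<subseteq> UR n I"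
      using UR_dagger[OF Jc_sub[of n I]] JJ by auto
  qed
  have cards: "card (UR n I :: 'a mat set) = card (UR n (Jc n I) :: 'a mat set)"
    by (rule bij_betw_same_card[OF b])
  have gc: "g \<in> carrier_mat n n" using UT_carrier[OF g] .
  have "(\<Sum>x\<in>UR n I. dual n \<psi> (g * x)) = (\<Sum>x\<in>UR n I. \<psi> (dagger n g * dagger n x))"
  proof (rule sum.cong[OF refl])
    fix x :: "'a mat" assume x: "x \<in> UR n I"
    have xu: "x \<in> UT n" using UR_UT[OF x] .
    have xc: "x \<in> carrier_mat n n" using UT_carrier[OF xu] .
    have "dual n \<psi> (g * x) = \<psi> (dagger n (g * x))" using gc xc by (intro dual_eq[OF psi]) auto
    also have "\<dots> = \<psi> (dagger n x * dagger n g)" using dagger_mult[OF gc xc] by simp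
    also have "\<dots> = \<psi> (dagger n g * dagger n x)" by (rule cf_comm[OF psi UT_dagger[OF xu] UT_dagger[OF g]])
    finally show "dual n \<psi> (g * x) = \<psi> (dagger n g * dagger n x)" .
  qed
  also have "\<dots> = (\<Sum>x\<in>UR n (Jc n I). \<psi> (dagger n g * x))"
    by (rule sum.reindex_bij_betw[OF b])
  finally show ?thesis unfolding DefRes_def cards by simp
qed



lemma st_in_UT: assumes I: "I \<subseteq> {0..<n}" and g: "g \<in> UL n I" and cI: "card I = a"
  and st: "st n I g = (x, y)"
  shows "x \<in> UT a" "y \<in> UT (n - a)"
proof -
  have gu: "g \<in> UT n" using UL_UT[OF g] .
  have cK: "card ({0..<n} - I) = n - a" using I cI by (simp add: card_Diff_subset finite_subset)
  have "x = mat (card I) (card I) (\<lambda>(i,j). g $$ (ee I i, ee I j))" using st by (simp add: st_ee)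
  thus "x \<in> UT a" using block_UT[OF I gu] cI by simp
  have "y = mat (card ({0..<n} - I)) (card ({0..<n} - I)) (\<lambda>(i,j). g $$ (ee ({0..<n} - I) i, ee ({0..<n} - I) j))"
    using st by (simp add: st_ee)
  thus "y \<in> UT (n - a)" using block_UT[of "{0..<n} - I" n g] gu cK by auto
qed

lemma G_bij: assumes I: "I \<subseteq> {0..<n}" and cI: "card I = a" and a: "a \<le> n"
  and x: "x \<in> UT a" and y: "y \<in> UT (n - a)"
  shows "bij_betw (dagger n) {g \<in> UL n I. st n I g = (x, y)}
           {h \<in> UL n (Jc n I). st n (Jc n I) h = (dagger (n - a) y, dagger a x)}"
proof (rule bij_betw_byWitness[where f' = "dagger n"])
  have JJ: "Jc n (Jc n I) = I" by (rule Jc_Jc[OF I])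
  have cJ: "card (Jc n I) = n - a" using Jc_card[OF I] cI by simp
  have xc: "x \<in> carrier_mat a a" and yc: "y \<in> carrier_mat (n - a) (n - a)"
    using UT_carrier x y by auto
  show "\<forall>g\<in>{g \<in> UL n I. st n I g = (x, y)}. dagger n (dagger n g) = g"
    using dagger_dagger UT_carrier UL_UT by blast
  show "\<forall>h\<in>{h \<in> UL n (Jc n I). st n (Jc n I) h = (dagger (n - a) y, dagger a x)}. dagger n (dagger n h) = h"
    using dagger_dagger UT_carrier UL_UT by blast
  show "dagger n ` {g \<in> UL n I. st n I g = (x, y)}
      \<subseteq> {h \<in> UL n (Jc n I). st n (Jc n I) h = (dagger (n - a) y, dagger a x)}"
  proof
    fix h assume "h \<in> dagger n ` {g \<in> UL n I. st n I g = (x, y)}"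
    then obtain g where g: "g \<in> UL n I" "st n I g = (x, y)" and h: "h = dagger n g" by auto
    show "h \<in> {h \<in> UL n (Jc n I). st n (Jc n I) h = (dagger (n - a) y, dagger a x)}"
      using UL_dagger[OF I g(1)] st_dagger[OF I, of g] g(2) cI h by simp
  qed
  show "dagger n ` {h \<in> UL n (Jc n I). st n (Jc n I) h = (dagger (n - a) y, dagger a x)}
      \<subseteq> {g \<in> UL n I. st n I g = (x, y)}"
  proof
    fix g assume "g \<in> dagger n ` {h \<in> UL n (Jc n I). st n (Jc n I) h = (dagger (n - a) y, dagger a x)}"
    then obtain h where h: "h \<in> UL n (Jc n I)" "st n (Jc n I) h = (dagger (n - a) y, dagger a x)"
      and g: "g = dagger n h" by auto
    have "g \<in> UL n I" using UL_dagger[OF Jc_sub[of n I] h(1)] JJ g by simp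
    moreover have "st n I g = (x, y)"
    proof -
      have "st n I g = st n (Jc n (Jc n I)) (dagger n h)" using JJ g by simp
      also have "\<dots> = (dagger (n - card (Jc n I)) (snd (st n (Jc n I) h)), dagger (card (Jc n I)) (fst (st n (Jc n I) h)))"
        by (rule st_dagger[OF Jc_sub])
      also have "\<dots> = (dagger a (dagger a x), dagger (n - a) (dagger (n - a) y))"
        using h(2) cJ a by simp
      also have "\<dots> = (x, y)" using dagger_dagger[OF xc] dagger_dagger[OF yc] by simp
      finally show ?thesis .
    qed
    ultimately show "g \<in> {g \<in> UL n I. st n I g = (x, y)}" by simp
  qed
qed

lemma part3: assumes psi: "\<psi> \<in> (cf n :: ('a::{finite,field} mat \<Rightarrow> complex) set)" and a: "a \<le> n"
  shows "coprod n a (dual n \<psi>) = swapf (dual2 (n - a) a (coprod n (n - a) \<psi>))"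
proof
  fix p :: "'a mat \<times> 'a mat"
  obtain x y where p: "p = (x, y)" by (cases p)
  let ?Ia = "{I. I \<subseteq> {0..<n} \<and> card I = a}"
  let ?Ib = "{I. I \<subseteq> {0..<n} \<and> card I = n - a}"
  have L: "coprod n a (dual n \<psi>) p = (\<Sum>I\<in>?Ia. \<Sum>g\<in>{g \<in> UL n I. st n I g = (x,y)}. DefRes n I (dual n \<psi>) g)"
    unfolding p coprod_def by simp
  have R: "swapf (dual2 (n - a) a (coprod n (n - a) \<psi>)) p =
     (if y \<in> UT (n - a) \<and> x \<in> UT a then
       (\<Sum>J\<in>?Ib. \<Sum>h\<in>{h \<in> UL n J. st n J h = (dagger (n - a) y, dagger a x)}. DefRes n J \<psi> h)
      else 0)"
    unfolding p swapf_def dual2_def coprod_def by simp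
  show "coprod n a (dual n \<psi>) p = swapf (dual2 (n - a) a (coprod n (n - a) \<psi>)) p"
  proof (cases "x \<in> UT a \<and> y \<in> UT (n - a)")
    case False
    have "(\<Sum>I\<in>?Ia. \<Sum>g\<in>{g \<in> UL n I. st n I g = (x,y)}. DefRes n I (dual n \<psi>) g) = 0"
    proof (rule sum.neutral, rule ballI)
      fix I assume I: "I \<in> ?Ia"
      have E: "{g :: 'a mat. g \<in> UL n I \<and> st n I g = (x,y)} = {}"
        using st_in_UT[of I n _ a x y] I False by auto
      show "(\<Sum>g\<in>{g :: 'a mat. g \<in> UL n I \<and> st n I g = (x,y)}. DefRes n I (dual n \<psi>) g) = 0"
        unfolding E by simp
    qed
    thus ?thesis using L R False by auto
  next
    case True
    hence x: "x \<in> UT a" and y: "y \<in> UT (n - a)" by auto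
    have "(\<Sum>I\<in>?Ia. \<Sum>g\<in>{g \<in> UL n I. st n I g = (x,y)}. DefRes n I (dual n \<psi>) g)
        = (\<Sum>I\<in>?Ia. \<Sum>g\<in>{g \<in> UL n I. st n I g = (x,y)}. DefRes n (Jc n I) \<psi> (dagger n g))"
      by (intro sum.cong refl) (use DefRes_dual[OF psi] UL_UT in blast)
    also have "\<dots> = (\<Sum>I\<in>?Ia. \<Sum>h\<in>{h \<in> UL n (Jc n I). st n (Jc n I) h = (dagger (n - a) y, dagger a x)}.
                        DefRes n (Jc n I) \<psi> h)"
    proof (rule sum.cong[OF refl])
      fix I assume I: "I \<in> ?Ia"
      show "(\<Sum>g\<in>{g \<in> UL n I. st n I g = (x,y)}. DefRes n (Jc n I) \<psi> (dagger n g)) =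
            (\<Sum>h\<in>{h \<in> UL n (Jc n I). st n (Jc n I) h = (dagger (n - a) y, dagger a x)}. DefRes n (Jc n I) \<psi> h)"
        using I by (intro sum.reindex_bij_betw G_bij a x y) auto
    qed
    also have "\<dots> = (\<Sum>J\<in>?Ib. \<Sum>h\<in>{h \<in> UL n J. st n J h = (dagger (n - a) y, dagger a x)}. DefRes n J \<psi> h)"
    proof (rule sum.reindex_bij_witness[where i = "Jc n" and j = "Jc n"])
      fix I assume I: "I \<in> ?Ia"
      show "Jc n (Jc n I) = I" using I Jc_Jc by auto
      show "Jc n I \<in> ?Ib" using I Jc_sub Jc_card by auto
    next
      fix J assume J: "J \<in> ?Ib"
      show "Jc n (Jc n J) = J" using J Jc_Jc by auto
      show "Jc n J \<in> ?Ia" using J Jc_sub Jc_card a by auto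
    qed simp
    finally show ?thesis using L R True by simp
  qed
qed

theorem theorem6p2:
  fixes dummy :: "'a::{finite,field} itself"
  shows "(\<forall>n. bij_betw (dual n) (cf n :: ('a mat \<Rightarrow> complex) set) (cf n))
       \<and> (\<forall>a b. \<forall>\<Phi>\<in>(cf2 a b :: ('a mat \<times> 'a mat \<Rightarrow> complex) set).
            mu a b (dual2 a b \<Phi>) = dual (a + b) (mu b a (swapf \<Phi>)))
       \<and> (\<forall>n a. \<forall>\<psi>\<in>(cf n :: ('a mat \<Rightarrow> complex) set). a \<le> n \<longrightarrow>
            coprod n a (dual n \<psi>) = swapf (dual2 (n - a) a (coprod n (n - a) \<psi>)))
       \<and> (\<forall>n. \<forall>\<psi>\<in>(cf n :: ('a mat \<Rightarrow> complex) set). ind n (dual n \<psi>) = ind n \<psi>)"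
  using part1 part2 part3 part4 by blast

end
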